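(* For all integers $m,n\geq 1$, \[p^{od}_{ed}(2m-1,2n)=p^{od}_{ed}(2m-1,2n-1).\]
   Context: $\mathcal{P}^{od}_{ed}$ is the set of integer partitions whose parts are all distinct and such that every even part is smaller than every odd part. Partitions consisting only of odd parts, or only of even parts, are allowed. $p^{od}_{ed}(m,n)$ is the number of partitions of $n$ in $\mathcal{P}^{od}_{ed}$ with exactly $m$ parts. *)

theory Defs
  imports Main
begin

text \<open>A partition into distinct parts is represented by its (finite) set of parts,
  all positive integers. The class P^od_ed: distinct parts, every even part is
  smaller than every odd part.\<close>

definition in_Pod_ed :: "nat set \<Rightarrow> bool" where
  "in_Pod_ed S \<longleftrightarrow> finite S \<and> 0 \<notin> S \<and>
     (\<forall>e\<in>S. \<forall>d\<in>S. even e \<longrightarrow> odd d \<longrightarrow> e < d)"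

definition p_od_ed :: "nat \<Rightarrow> nat \<Rightarrow> nat" where
  "p_od_ed m n = card {S. in_Pod_ed S \<and> card S = m \<and> \<Sum>S = n}"

end

theory Submission
  imports Defs
begin

lemma all_odd_sum: "finite S \<Longrightarrow> \<forall>x\<in>S. odd (x::nat) \<Longrightarrow> (even (\<Sum>S) \<longleftrightarrow> even (card S))"
  by (induction S rule: finite_induct) auto

lemma all_even_sum: "\<forall>x\<in>S. even (x::nat) \<Longrightarrow> even (\<Sum>S)"
  by (simp add: dvd_sum)

definition fw :: "nat set \<Rightarrow> nat set" where
  "fw S = (let e = Max {x\<in>S. even x} in insert (e - 1) (S - {e}))"

definition bw :: "nat set \<Rightarrow> nat set" where
  "bw T = (let d = Min {x\<in>T. odd x} in insert (d + 1) (T - {d}))"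

lemma fw_props:
  assumes P: "in_Pod_ed S" and ex: "\<exists>x\<in>S. even x"
  shows "in_Pod_ed (fw S) \<and> card (fw S) = card S \<and> \<Sum>(fw S) = \<Sum>S - 1
         \<and> \<Sum>S \<ge> 1 \<and> bw (fw S) = S"
proof -
  define e where "e = Max {x\<in>S. even x}"
  have fin: "finite S" "0 \<notin> S" and ord: "\<forall>a\<in>S. \<forall>b\<in>S. even a \<longrightarrow> odd b \<longrightarrow> a < b"
    using P unfolding in_Pod_ed_def by auto
  have finE: "finite {x\<in>S. even x}" using fin by simp
  have eE: "e \<in> {x\<in>S. even x}" unfolding e_def using finE ex by (intro Max_in) auto
  hence eS: "e \<in> S" and ee: "even e" by auto
  have emax: "\<And>a. a \<in> S \<Longrightarrow> even a \<Longrightarrow> a \<le> e" unfolding e_def using finE by auto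
  have "e \<noteq> 0" using eS fin(2) by metis
  hence e2: "e \<ge> 2" using ee by presburger
  have oe1: "odd (e - 1)" using ee e2 by auto
  have nS: "e - 1 \<notin> S" using ord eS ee oe1 by fastforce
  have fwS: "fw S = insert (e - 1) (S - {e})" unfolding fw_def e_def[symmetric] by simp
  have nS': "e - 1 \<notin> S - {e}" using nS by auto
  have inP: "in_Pod_ed (fw S)"
    unfolding in_Pod_ed_def fwS
  proof (intro conjI ballI impI)
    show "finite (insert (e - 1) (S - {e}))" using fin by simp
    show "0 \<notin> insert (e - 1) (S - {e})" using fin e2 by auto
    fix a b assume a: "a \<in> insert (e - 1) (S - {e})" and b: "b \<in> insert (e - 1) (S - {e})"
      and ea: "even a" and ob: "odd b"
    have aS: "a \<in> S" "a \<noteq> e" using a ea oe1 by auto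
    have "a < e" using emax[OF aS(1) ea] aS(2) by simp
    hence "a < e - 1" using ea ee by presburger
    then show "a < b" using b ord aS ea ob by auto
  qed
  have card: "card (fw S) = card S" unfolding fwS using fin eS nS'
    by (metis card_Suc_Diff1 card_insert_disjoint finite_Diff)
  have sumge: "\<Sum>S \<ge> e" using fin eS member_le_sum[of e S id] by simp
  have sum: "\<Sum>(fw S) = \<Sum>S - 1" unfolding fwS using fin eS nS' sumge e2
    by (simp add: sum_diff1_nat)
  have minO: "Min {x\<in>fw S. odd x} = e - 1"
  proof (rule Min_eqI)
    show "finite {x\<in>fw S. odd x}" using inP unfolding in_Pod_ed_def by simp
    show "e - 1 \<in> {x\<in>fw S. odd x}" using fwS oe1 by simp
    fix y assume "y \<in> {x\<in>fw S. odd x}"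
    then show "e - 1 \<le> y" using fwS ord eS ee by fastforce
  qed
  have "bw (fw S) = insert e (fw S - {e - 1})" unfolding bw_def minO using e2 by simp
  also have "\<dots> = S"
  proof -
    have "insert (e - 1) (S - {e}) - {e - 1} = S - {e}" using nS by blast
    then show ?thesis unfolding fwS using insert_Diff[OF eS] by simp
  qed
  finally have bf: "bw (fw S) = S" .
  have s1: "\<Sum>S \<ge> 1" using sumge e2 by linarith
  show ?thesis by (intro conjI inP card sum s1 bf)
qed

lemma bw_props:
  assumes P: "in_Pod_ed T" and ex: "\<exists>x\<in>T. odd x"
  shows "in_Pod_ed (bw T) \<and> card (bw T) = card T \<and> \<Sum>(bw T) = \<Sum>T + 1
         \<and> fw (bw T) = T"
proof -
  define d where "d = Min {x\<in>T. odd x}"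
  have fin: "finite T" "0 \<notin> T" and ord: "\<forall>a\<in>T. \<forall>b\<in>T. even a \<longrightarrow> odd b \<longrightarrow> a < b"
    using P unfolding in_Pod_ed_def by auto
  have finE: "finite {x\<in>T. odd x}" using fin by simp
  have dE: "d \<in> {x\<in>T. odd x}" unfolding d_def using finE ex by (intro Min_in) auto
  hence dT: "d \<in> T" and od: "odd d" by auto
  have dmin: "\<And>a. a \<in> T \<Longrightarrow> odd a \<Longrightarrow> d \<le> a" unfolding d_def using finE by auto
  have ed1: "even (d + 1)" using od by auto
  have nT: "d + 1 \<notin> T" using ord dT od ed1 by fastforce
  have bwT: "bw T = insert (d + 1) (T - {d})" unfolding bw_def d_def[symmetric] by simp
  have nT': "d + 1 \<notin> T - {d}" using nT by auto
  have inP: "in_Pod_ed (bw T)"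
    unfolding in_Pod_ed_def bwT
  proof (intro conjI ballI impI)
    show "finite (insert (d + 1) (T - {d}))" using fin by simp
    show "0 \<notin> insert (d + 1) (T - {d})" using fin by auto
    fix a b assume a: "a \<in> insert (d + 1) (T - {d})" and b: "b \<in> insert (d + 1) (T - {d})"
      and ea: "even a" and ob: "odd b"
    have bT: "b \<in> T" "b \<noteq> d" using b ob ed1 by auto
    have "d < b" using dmin[OF bT(1) ob] bT(2) by simp
    hence "d + 1 < b" using ob od by presburger
    then show "a < b" using a ord bT ea ob by auto
  qed
  have card: "card (bw T) = card T" unfolding bwT using fin dT nT'
    by (metis card_Suc_Diff1 card_insert_disjoint finite_Diff)
  have sumge: "\<Sum>T \<ge> d" using fin dT member_le_sum[of d T id] by simp
  have sum: "\<Sum>(bw T) = \<Sum>T + 1" unfolding bwT using fin dT nT' sumge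
    by (simp add: sum_diff1_nat)
  have maxE: "Max {x\<in>bw T. even x} = d + 1"
  proof (rule Max_eqI)
    show "finite {x\<in>bw T. even x}" using inP unfolding in_Pod_ed_def by simp
    show "d + 1 \<in> {x\<in>bw T. even x}" using bwT ed1 by simp
    fix y assume y: "y \<in> {x\<in>bw T. even x}"
    hence yy: "y = d + 1 \<or> y \<in> T" and ey: "even y" using bwT by auto
    have "y \<in> T \<Longrightarrow> y < d" using ord dT od ey by blast
    then show "y \<le> d + 1" using yy by linarith
  qed
  have "fw (bw T) = insert (d + 1 - 1) (bw T - {d + 1})" by (simp only: fw_def maxE Let_def)
  also have "\<dots> = insert d (bw T - {d + 1})" by simp
  also have "\<dots> = T"
  proof -
    have "insert (d + 1) (T - {d}) - {d + 1} = T - {d}" using nT by blast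
    then show ?thesis unfolding bwT using insert_Diff[OF dT] by simp
  qed
  finally have bf: "fw (bw T) = T" .
  show ?thesis by (intro conjI inP card sum bf)
qed

theorem mainTheorem3:
  fixes m n :: nat
  assumes "m \<ge> 1" and "n \<ge> 1"
  shows "p_od_ed (2*m - 1) (2*n) = p_od_ed (2*m - 1) (2*n - 1)"
proof -
  define A where "A = {S. in_Pod_ed S \<and> card S = 2*m - 1 \<and> \<Sum>S = 2*n}"
  define B where "B = {S. in_Pod_ed S \<and> card S = 2*m - 1 \<and> \<Sum>S = 2*n - 1}"
  have oc: "odd (2*m - 1)" using assms by presburger
  have exA: "\<exists>x\<in>S. even x" if "S \<in> A" for S
  proof (rule ccontr)
    assume "\<not> ?thesis"
    hence "\<forall>x\<in>S. odd x" by auto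
    moreover have "finite S" using that unfolding A_def in_Pod_ed_def by auto
    ultimately have "even (\<Sum>S) = even (card S)" using all_odd_sum by blast
    moreover have "\<Sum>S = 2*n" "card S = 2*m - 1" using that unfolding A_def by auto
    ultimately show False using oc by simp
  qed
  have exB: "\<exists>x\<in>S. odd x" if "S \<in> B" for S
  proof (rule ccontr)
    assume "\<not> ?thesis"
    hence "\<forall>x\<in>S. even x" by auto
    then have "even (\<Sum>S)" by (rule all_even_sum)
    then show False using that assms unfolding B_def by auto
  qed
  have "bij_betw fw A B"
  proof (rule bij_betw_byWitness[where f' = bw])
    show "\<forall>a\<in>A. bw (fw a) = a" using fw_props exA unfolding A_def by blast
    show "\<forall>a'\<in>B. fw (bw a') = a'" using bw_props exB unfolding B_def by blast
    show "fw ` A \<subseteq> B"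
    proof
      fix T assume "T \<in> fw ` A"
      then obtain S where S: "S \<in> A" "T = fw S" by auto
      then show "T \<in> B" using fw_props[OF _ exA[OF S(1)]] unfolding A_def B_def by auto
    qed
    show "bw ` B \<subseteq> A"
    proof
      fix T assume "T \<in> bw ` B"
      then obtain S where S: "S \<in> B" "T = bw S" by auto
      then show "T \<in> A" using bw_props[OF _ exB[OF S(1)]] assms unfolding A_def B_def by auto
    qed
  qed
  then have "card A = card B" by (rule bij_betw_same_card)
  then show ?thesis unfolding p_od_ed_def A_def B_def .
qed

end
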